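(* For each $j=1,\dots,m$ let $Y(\mathbf x_j)=\mathbf x_j^\intercal\boldsymbol\beta+\epsilon(\mathbf x_j)$, where $\boldsymbol\beta,\mathbf x_j\in\mathbb R^d$ and $\epsilon(\mathbf x_j)\sim\mathcal N(0,\sigma_j^2)$, with $\epsilon(\mathbf x_1),\dots,\epsilon(\mathbf x_m)$ independent. Let $Y_1(\mathbf x_j),Y_2(\mathbf x_j),\dots$ be independent samples of $Y(\mathbf x_j)$. Let $T$ be a set of random variables independent of $\sum_{\ell=1}^nY_\ell(\mathbf x_j)$ and of $\{Y_\ell(\mathbf x_j):\ell\ge n+1\}$ for all $j=1,\dots,m$. Suppose each $N_j\ge n$ is an integer-valued function of $T$ and no other random variables. Let $\widehat Y_j=N_j^{-1}\sum_{\ell=1}^{N_j}Y_\ell(\mathbf x_j)$, $\widehat{\mathbf Y}=(\widehat Y_1,\dots,\widehat Y_m)^\intercal$, $\mathcal X=(\mathbf x_1,\dots,\mathbf x_m)^\intercal$ (assume $\mathcal X^\intercal\mathcal X$ is nonsingular), $\widehat{\boldsymbol\beta}=(\mathcal X^\intercal\mathcal X)^{-1}\mathcal X^\intercal\widehat{\mathbf Y}$, and $\Sigma=\mathrm{Diag}(\sigma_1^2/N_1,\dots,\sigma_m^2/N_m)$. Then for any $\mathbf x\in\mathbb R^d$: (i) conditionally on $T$, $\mathbf x^\intercal\widehat{\boldsymbol\beta}\sim\mathcal N\big(\mathbf x^\intercal\boldsymbol\beta,\mathbf x^\intercal(\mathcal X^\intercal\mathcal X)^{-1}\mathcal X^\intercal\Sigma\mathcal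 X(\mathcal X^\intercal\mathcal X)^{-1}\mathbf x\big)$; (ii) $\frac{\mathbf x^\intercal\widehat{\boldsymbol\beta}-\mathbf x^\intercal\boldsymbol\beta}{\sqrt{\mathbf x^\intercal(\mathcal X^\intercal\mathcal X)^{-1}\mathcal X^\intercal\Sigma\mathcal X(\mathcal X^\intercal\mathcal X)^{-1}\mathbf x}}$ is independent of $T$ and has the standard normal distribution. *)

theory Defs
  imports "HOL-Probability.Probability"
begin

definition gaussian :: "real \<Rightarrow> real \<Rightarrow> real measure" where
  "gaussian mu v = (if v = 0 then return borel mu
                    else density lborel (normal_density mu (sqrt v)))"

text \<open>Conditional distribution: conditionally on the random element T (with values in MT),
  the real random variable Z has law K t when T = t, i.e. K composed with T is a regular
  conditional distribution of Z given T:  P(T \<in> A, Z \<in> B) = E[1_A(T) K_T(B)].\<close>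
definition cond_distributed ::
  "'a measure \<Rightarrow> ('a \<Rightarrow> 't) \<Rightarrow> 't measure \<Rightarrow> ('a \<Rightarrow> real) \<Rightarrow> ('t \<Rightarrow> real measure) \<Rightarrow> bool" where
  "cond_distributed M T MT Z K \<longleftrightarrow>
     T \<in> measurable M MT \<and> Z \<in> borel_measurable M \<and>
     (\<forall>A\<in>sets MT. \<forall>B\<in>sets borel.
        emeasure M {\<omega>\<in>space M. T \<omega> \<in> A \<and> Z \<omega> \<in> B}
          = (\<integral>\<^sup>+ \<omega>. indicator A (T \<omega>) * emeasure (K (T \<omega>)) B \<partial>M))"

text \<open>Independence of two random elements with possibly different value spaces
  (the library's indep_var forces both to have the same type); this is indep_vars_def2
  spelled out for two variables.\<close>
definition indep_rv ::
  "'a measure \<Rightarrow> 'b measure \<Rightarrow> ('a \<Rightarrow> 'b) \<Rightarrow> 'c measure \<Rightarrow> ('a \<Rightarrow> 'c) \<Rightarrow> bool" where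
  "indep_rv M MA X MB Z \<longleftrightarrow>
     X \<in> measurable M MA \<and> Z \<in> measurable M MB \<and>
     prob_space.indep_set M {X -` A \<inter> space M | A. A \<in> sets MA}
                            {Z -` B \<inter> space M | B. B \<in> sets MB}"

end

theory Submission
  imports Defs
begin

lemma indep_rv_fubini:
  assumes M: "prob_space M" and ind: "indep_rv M MT T MG G"
    and Psi: "Psi \<in> borel_measurable (MT \<Otimes>\<^sub>M MG)"
    and A: "A \<in> sets MT" and B: "B \<in> sets borel"
  shows "emeasure M {\<omega>\<in>space M. T \<omega> \<in> A \<and> Psi (T \<omega>, G \<omega>) \<in> B}
       = (\<integral>\<^sup>+\<omega>. indicator A (T \<omega>) * emeasure M {\<omega>'\<in>space M. Psi (T \<omega>, G \<omega>') \<in> B} \<partial>M)"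
proof -
  interpret prob_space M by fact
  have Tm: "T \<in> measurable M MT" and Gm: "G \<in> measurable M MG"
    and iset: "indep_set {T -` A \<inter> space M |A. A \<in> sets MT} {G -` B \<inter> space M |B. B \<in> sets MG}"
    using ind unfolding indep_rv_def by auto
  let ?PT = "distr M MT T" let ?PG = "distr M MG G"
  interpret PT: prob_space ?PT by (rule prob_space_distr[OF Tm])
  interpret PG: prob_space ?PG by (rule prob_space_distr[OF Gm])
  have TGm: "(\<lambda>\<omega>. (T \<omega>, G \<omega>)) \<in> measurable M (MT \<Otimes>\<^sub>M MG)" using Tm Gm by measurable
  have joint: "?PT \<Otimes>\<^sub>M ?PG = distr M (MT \<Otimes>\<^sub>M MG) (\<lambda>\<omega>. (T \<omega>, G \<omega>))"
  proof (rule pair_measure_eqI)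
    show "sigma_finite_measure ?PT" "sigma_finite_measure ?PG"
      by (rule prob_space_imp_sigma_finite, unfold_locales)+
    show "sets (?PT \<Otimes>\<^sub>M ?PG) = sets (distr M (MT \<Otimes>\<^sub>M MG) (\<lambda>\<omega>. (T \<omega>, G \<omega>)))"
      by (simp cong: sets_pair_measure_cong)
  next
    fix X Y assume "X \<in> sets ?PT" "Y \<in> sets ?PG"
    then have X: "X \<in> sets MT" and Y: "Y \<in> sets MG" by simp_all
    have "emeasure (distr M (MT \<Otimes>\<^sub>M MG) (\<lambda>\<omega>. (T \<omega>, G \<omega>))) (X \<times> Y)
        = emeasure M ((T -` X \<inter> space M) \<inter> (G -` Y \<inter> space M))"
      by (subst emeasure_distr[OF TGm]) (auto intro: X Y arg_cong[where f="emeasure M"])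
    also have "\<dots> = emeasure M (T -` X \<inter> space M) * emeasure M (G -` Y \<inter> space M)"
    proof -
      have "prob ((T -` X \<inter> space M) \<inter> (G -` Y \<inter> space M)) = prob (T -` X \<inter> space M) * prob (G -` Y \<inter> space M)"
        by (rule indep_setD[OF iset]) (use X Y in auto)
      then show ?thesis by (simp add: emeasure_eq_measure ennreal_mult')
    qed
    also have "\<dots> = emeasure ?PT X * emeasure ?PG Y"
      by (simp add: emeasure_distr[OF Tm X] emeasure_distr[OF Gm Y])
    finally show "emeasure ?PT X * emeasure ?PG Y = emeasure (distr M (MT \<Otimes>\<^sub>M MG) (\<lambda>\<omega>. (T \<omega>, G \<omega>))) (X \<times> Y)"
      by simp
  qed
  define E where "E = {p \<in> space (MT \<Otimes>\<^sub>M MG). fst p \<in> A \<and> Psi p \<in> B}"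
  have E: "E \<in> sets (MT \<Otimes>\<^sub>M MG)" using Psi A B unfolding E_def by measurable
  have E': "E \<in> sets (?PT \<Otimes>\<^sub>M ?PG)" using E by (simp cong: sets_pair_measure_cong)
  have "emeasure M {\<omega>\<in>space M. T \<omega> \<in> A \<and> Psi (T \<omega>, G \<omega>) \<in> B}
      = emeasure (distr M (MT \<Otimes>\<^sub>M MG) (\<lambda>\<omega>. (T \<omega>, G \<omega>))) E"
    by (subst emeasure_distr[OF TGm E])
       (auto intro!: arg_cong[where f="emeasure M"] simp: E_def space_pair_measure
          measurable_space[OF Tm] measurable_space[OF Gm])
  also have "\<dots> = emeasure (?PT \<Otimes>\<^sub>M ?PG) E" by (simp add: joint)
  also have "\<dots> = (\<integral>\<^sup>+t. emeasure ?PG (Pair t -` E) \<partial>?PT)"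
    by (rule PG.emeasure_pair_measure_alt[OF E'])
  also have "\<dots> = (\<integral>\<^sup>+\<omega>. emeasure ?PG (Pair (T \<omega>) -` E) \<partial>M)"
    by (rule nn_integral_distr[OF Tm PG.measurable_emeasure_Pair[OF E']])
  also have "\<dots> = (\<integral>\<^sup>+\<omega>. indicator A (T \<omega>) * emeasure M {\<omega>'\<in>space M. Psi (T \<omega>, G \<omega>') \<in> B} \<partial>M)"
  proof (rule nn_integral_cong)
    fix \<omega> assume \<omega>: "\<omega> \<in> space M"
    then have t: "T \<omega> \<in> space MT" by (rule measurable_space[OF Tm])
    have PE: "Pair (T \<omega>) -` E \<in> sets MG" using sets_Pair1[OF E] .
    show "emeasure ?PG (Pair (T \<omega>) -` E) = indicator A (T \<omega>) * emeasure M {\<omega>'\<in>space M. Psi (T \<omega>, G \<omega>') \<in> B}"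
    proof (cases "T \<omega> \<in> A")
      case True
      have eq: "Pair (T \<omega>) -` E = {g \<in> space MG. Psi (T \<omega>, g) \<in> B}"
        using t True by (auto simp: E_def space_pair_measure)
      have "emeasure ?PG (Pair (T \<omega>) -` E) = emeasure M (G -` (Pair (T \<omega>) -` E) \<inter> space M)"
        by (rule emeasure_distr[OF Gm PE])
      also have "G -` (Pair (T \<omega>) -` E) \<inter> space M = {\<omega>'\<in>space M. Psi (T \<omega>, G \<omega>') \<in> B}"
        unfolding eq using measurable_space[OF Gm] by auto
      finally show ?thesis using True by simp
    next
      case False
      then have "Pair (T \<omega>) -` E = {}" by (auto simp: E_def)
      then show ?thesis using False by simp
    qed
  qed
  finally show ?thesis .
qed


lemma minv:
  fixes S :: "real^'d^'d"
  assumes "invertible S"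
  shows "S ** matrix_inv S = mat 1" "matrix_inv S ** S = mat 1"
  using someI_ex[OF assms[unfolded invertible_def]] unfolding matrix_inv_def by auto

lemma minv_sym:
  fixes S :: "real^'d^'d"
  assumes "invertible S" "transpose S = S"
  shows "transpose (matrix_inv S) = matrix_inv S"
proof -
  let ?A = "matrix_inv S"
  have h: "transpose ?A ** S = mat 1"
    using arg_cong[OF minv(1)[OF assms(1)], of transpose] assms(2) by (simp add: matrix_transpose_mul)
  have "transpose ?A = transpose ?A ** (S ** ?A)" using minv(1)[OF assms(1)] by simp
  also have "\<dots> = (transpose ?A ** S) ** ?A" by (simp add: matrix_mul_assoc)
  also have "\<dots> = ?A" using h by simp
  finally show ?thesis .
qed

lemma sum_split_n:
  fixes h :: "nat \<Rightarrow> real"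
  assumes "n \<le> N"
  shows "(\<Sum>l\<in>{1..N}. h l) = (\<Sum>l\<in>{1..n}. h l) + (\<Sum>k\<in>{1..N-n}. h (n+k))"
proof -
  obtain p where N: "N = n + p" using assms le_Suc_ex by blast
  show ?thesis unfolding N by (induct p) (simp_all add: add.assoc)
qed

theorem lemma3:
  fixes M :: "'a measure"
    and Y :: "'m::finite \<Rightarrow> nat \<Rightarrow> 'a \<Rightarrow> real"
    and x :: "'m \<Rightarrow> real^'d"
    and \<beta> :: "real^'d"
    and \<sigma> :: "'m \<Rightarrow> real"
    and n :: nat
    and T :: "'a \<Rightarrow> 't" and MT :: "'t measure"
    and f :: "'m \<Rightarrow> 't \<Rightarrow> nat"
    and z :: "real^'d"
    and X :: "real^'d^'m" and A :: "real^'d^'d"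
    and Yhat :: "'m \<Rightarrow> 'a \<Rightarrow> real" and \<beta>hat :: "'a \<Rightarrow> real^'d"
    and \<Sigma> :: "'t \<Rightarrow> real^'m^'m" and v :: "'t \<Rightarrow> real"
  assumes M: "prob_space M"
    and sigma_pos: "\<And>j. \<sigma> j > 0"
    and Y_normal: "\<And>j l. l \<ge> 1 \<Longrightarrow>
          distributed M lborel (Y j l) (normal_density (x j \<bullet> \<beta>) (\<sigma> j))"
    and Y_indep: "prob_space.indep_vars M (\<lambda>_. borel) (\<lambda>(j, l). Y j l) (UNIV \<times> {1..})"
    and n_pos: "n \<ge> 1"
    and T_indep: "indep_rv M MT T (PiM UNIV (\<lambda>_. borel))
          (\<lambda>\<omega>. \<lambda>(j, k). if k = 0 then (\<Sum>l\<in>{1..n}. Y j l \<omega>) else Y j (n + k) \<omega>)"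
    and f_meas: "\<And>j. f j \<in> measurable MT (count_space UNIV)"
    and f_ge: "\<And>j t. t \<in> space MT \<Longrightarrow> f j t \<ge> n"
    and nonsing: "invertible (transpose (\<chi> j. x j) ** (\<chi> j. x j) :: real^'d^'d)"
    and X_def: "X = (\<chi> j. x j)"
    and A_def: "A = matrix_inv (transpose X ** X)"
    and Yhat_def: "Yhat = (\<lambda>j \<omega>. (\<Sum>l\<in>{1..f j (T \<omega>)}. Y j l \<omega>) / real (f j (T \<omega>)))"
    and \<beta>hat_def: "\<beta>hat = (\<lambda>\<omega>. (A ** transpose X) *v (\<chi> j. Yhat j \<omega>))"
    and \<Sigma>_def: "\<Sigma> = (\<lambda>t. \<chi> i k. if i = k then (\<sigma> i)\<^sup>2 / real (f i t) else 0)"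
    and v_def: "v = (\<lambda>t. z \<bullet> ((A ** transpose X ** \<Sigma> t ** X ** A) *v z))"
  shows "cond_distributed M T MT (\<lambda>\<omega>. z \<bullet> \<beta>hat \<omega>) (\<lambda>t. gaussian (z \<bullet> \<beta>) (v t))
       \<and> (z \<noteq> 0 \<longrightarrow>
            indep_rv M MT T borel
              (\<lambda>\<omega>. (z \<bullet> \<beta>hat \<omega> - z \<bullet> \<beta>) / sqrt (v (T \<omega>)))
          \<and> distributed M lborel (\<lambda>\<omega>. (z \<bullet> \<beta>hat \<omega> - z \<bullet> \<beta>) / sqrt (v (T \<omega>)))
              std_normal_density)"
proof -
  interpret prob_space M by (rule M)
  let ?PG = "PiM UNIV (\<lambda>_::('m \<times> nat). borel) :: ('m \<times> nat \<Rightarrow> real) measure"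
  define G where "G = (\<lambda>\<omega>. \<lambda>(j, k). if k = 0 then (\<Sum>l\<in>{1..n}. Y j l \<omega>) else Y j (n + k) \<omega>)"
  have TG: "indep_rv M MT T ?PG G" using T_indep unfolding G_def .
  have Tm[measurable]: "T \<in> measurable M MT" and Gm[measurable]: "G \<in> measurable M ?PG"
    using TG unfolding indep_rv_def by auto
  define S where "S = transpose X ** X"
  have Sinv: "invertible S" using nonsing X_def S_def by simp
  have S_sym: "transpose S = S" unfolding S_def by (simp add: matrix_transpose_mul)
  have AS: "A ** S = mat 1" using minv(2)[OF Sinv] A_def S_def by simp
  have A_sym: "transpose A = A" using minv_sym[OF Sinv S_sym] A_def S_def by simp
  define c where "c = z v* (A ** transpose X)"
  have c_X: "c v* X = z"
  proof -
    have "c v* X = z v* (A ** (transpose X ** X))"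
      by (simp add: c_def vector_matrix_mul_assoc matrix_mul_assoc)
    then show ?thesis using AS by (simp add: S_def)
  qed
  have Xc: "X *v (A *v z) = c"
  proof -
    have "c = (z v* A) v* transpose X" by (simp only: c_def vector_matrix_mul_assoc)
    also have "\<dots> = X *v (z v* A)" by (simp only: vector_transpose_matrix)
    also have "z v* A = A *v z" using transpose_matrix_vector[of A z] A_sym by simp
    finally show ?thesis by simp
  qed
  have c0: "z \<noteq> 0 \<Longrightarrow> c \<noteq> 0" using c_X by auto
  have mean: "(\<Sum>j\<in>UNIV. c$j * (x j \<bullet> \<beta>)) = z \<bullet> \<beta>"
  proof -
    have "(\<Sum>j\<in>UNIV. c$j * (x j \<bullet> \<beta>)) = c \<bullet> (X *v \<beta>)"
      by (simp add: inner_vec_def matrix_vector_mult_def X_def sum_distrib_left)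
    also have "\<dots> = (c v* X) \<bullet> \<beta>" by (simp add: dot_lmul_matrix)
    also have "\<dots> = z \<bullet> \<beta>" using c_X by simp
    finally show ?thesis .
  qed
  have zb: "\<And>\<omega>. z \<bullet> \<beta>hat \<omega> = (\<Sum>j\<in>UNIV. c$j * Yhat j \<omega>)"
    unfolding \<beta>hat_def dot_lmul_matrix[symmetric] c_def[symmetric] by (simp add: inner_vec_def)
  have v_eq: "\<And>t. v t = (\<Sum>j\<in>UNIV. (c$j)^2 * (\<sigma> j)^2 / real (f j t))"
  proof -
    fix t
    have "v t = (z v* (A ** transpose X ** \<Sigma> t ** X ** A)) \<bullet> z" by (simp add: v_def dot_lmul_matrix)
    also have "z v* (A ** transpose X ** \<Sigma> t ** X ** A) = ((c v* \<Sigma> t) v* X) v* A"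
      by (simp add: c_def vector_matrix_mul_assoc matrix_mul_assoc)
    also have "(((c v* \<Sigma> t) v* X) v* A) \<bullet> z = (c v* \<Sigma> t) \<bullet> (X *v (A *v z))"
      by (simp add: dot_lmul_matrix)
    also have "\<dots> = (c v* \<Sigma> t) \<bullet> c" using Xc by simp
    also have "\<dots> = (\<Sum>j\<in>UNIV. (c$j)^2 * (\<sigma> j)^2 / real (f j t))"
      by (simp add: \<Sigma>_def inner_vec_def vector_matrix_mult_def if_distrib power2_eq_square mult_ac
            cong: if_cong)
    finally show "v t = (\<Sum>j\<in>UNIV. (c$j)^2 * (\<sigma> j)^2 / real (f j t))" .
  qed
  define R where "R = (\<lambda>t \<omega>. \<Sum>j\<in>UNIV. c$j * (\<Sum>l\<in>{1..f j t}. Y j l \<omega>) / real (f j t))"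
  define \<Psi> where "\<Psi> = (\<lambda>p::'t \<times> ('m \<times> nat \<Rightarrow> real). \<Sum>j\<in>UNIV.
       c$j * (snd p (j,0) + (\<Sum>k\<in>{1..f j (fst p) - n}. snd p (j,k))) / real (f j (fst p)))"
  have zbR: "\<And>\<omega>. z \<bullet> \<beta>hat \<omega> = R (T \<omega>) \<omega>"
    by (simp add: zb Yhat_def R_def)
  have inner: "\<And>t \<omega> j. t \<in> space MT \<Longrightarrow>
      G \<omega> (j,0) + (\<Sum>k\<in>{1..f j t - n}. G \<omega> (j,k)) = (\<Sum>l\<in>{1..f j t}. Y j l \<omega>)"
  proof -
    fix t \<omega> j assume t: "t \<in> space MT"
    have "(\<Sum>k\<in>{1..f j t - n}. G \<omega> (j,k)) = (\<Sum>k\<in>{1..f j t - n}. Y j (n+k) \<omega>)"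
      by (rule sum.cong) (auto simp: G_def)
    then show "G \<omega> (j,0) + (\<Sum>k\<in>{1..f j t - n}. G \<omega> (j,k)) = (\<Sum>l\<in>{1..f j t}. Y j l \<omega>)"
      using sum_split_n[OF f_ge[OF t], of "\<lambda>l. Y j l \<omega>"] by (simp add: G_def)
  qed
  have PsiR: "\<And>t \<omega>. t \<in> space MT \<Longrightarrow> \<Psi> (t, G \<omega>) = R t \<omega>"
  proof -
    fix t \<omega> assume t: "t \<in> space MT"
    show "\<Psi> (t, G \<omega>) = R t \<omega>" by (simp only: \<Psi>_def R_def fst_conv snd_conv inner[OF t])
  qed
  have eqZ: "\<And>\<omega>. \<omega> \<in> space M \<Longrightarrow> z \<bullet> \<beta>hat \<omega> = \<Psi> (T \<omega>, G \<omega>)"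
    by (simp add: zbR PsiR measurable_space[OF Tm])
  have fm[measurable]: "\<And>j. (\<lambda>t. real (f j t)) \<in> borel_measurable MT"
    by (rule measurable_compose[OF f_meas borel_measurable_count_space])
  have Psi_m[measurable]: "\<Psi> \<in> borel_measurable (MT \<Otimes>\<^sub>M ?PG)"
  proof -
    have "\<And>j. (\<lambda>p::'t \<times> ('m \<times> nat \<Rightarrow> real). c$j * (snd p (j,0) + (\<Sum>k\<in>{1..f j (fst p) - n}. snd p (j,k)))
           / real (f j (fst p))) \<in> borel_measurable (MT \<Otimes>\<^sub>M ?PG)"
    proof -
      fix j
      have g: "(\<lambda>p::'t \<times> ('m \<times> nat \<Rightarrow> real). f j (fst p)) \<in> measurable (MT \<Otimes>\<^sub>M ?PG) (count_space UNIV)"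
        using f_meas[of j] by measurable
      show "(\<lambda>p::'t \<times> ('m \<times> nat \<Rightarrow> real). c$j * (snd p (j,0) + (\<Sum>k\<in>{1..f j (fst p) - n}. snd p (j,k)))
           / real (f j (fst p))) \<in> borel_measurable (MT \<Otimes>\<^sub>M ?PG)"
        by (rule measurable_compose_countable[where f="\<lambda>i p. c$j * (snd p (j,0) + (\<Sum>k\<in>{1..i - n}. snd p (j,k))) / real i", OF _ g])
           measurable
    qed
    then show ?thesis unfolding \<Psi>_def by (intro borel_measurable_sum)
  qed
  have v_fun: "v = (\<lambda>t. \<Sum>j\<in>UNIV. (c$j)^2 * (\<sigma> j)^2 / real (f j t))" using v_eq by auto
  have v_m[measurable]: "v \<in> borel_measurable MT" unfolding v_fun by measurable
  define \<Psi>2 where "\<Psi>2 = (\<lambda>p. (\<Psi> p - z \<bullet> \<beta>) / sqrt (v (fst p)))"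
  have Psi2_m: "\<Psi>2 \<in> borel_measurable (MT \<Otimes>\<^sub>M ?PG)" unfolding \<Psi>2_def by measurable
  have Rdist: "\<And>t. t \<in> space MT \<Longrightarrow> z \<noteq> 0 \<Longrightarrow>
      distributed M lborel (R t) (normal_density (z \<bullet> \<beta>) (sqrt (v t))) \<and> v t > 0"
  proof -
    fix t assume t: "t \<in> space MT" and z: "z \<noteq> 0"
    define N where "N = (\<lambda>j. f j t)"
    have N1: "\<And>j. N j \<ge> 1" using f_ge[OF t] n_pos unfolding N_def by (meson order_trans)
    have Nnz: "\<And>j. N j \<noteq> 0" using N1 by (metis not_one_le_zero)
    define J where "J = {j. c$j \<noteq> 0}"
    define I where "I = Sigma J (\<lambda>j. {1..N j})"
    define a where "a = (\<lambda>p::'m \<times> nat. c$(fst p) / real (N (fst p)))"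
    define s where "s = (\<lambda>p::'m \<times> nat. \<bar>a p\<bar> * \<sigma> (fst p))"
    define mu where "mu = (\<lambda>p::'m \<times> nat. a p * (x (fst p) \<bullet> \<beta>))"
    have cne: "c \<noteq> 0" using c0 z .
    then obtain j0 where "c$j0 \<noteq> 0" by (metis vec_eq_iff zero_index)
    then have j0I: "(j0, 1) \<in> I" using N1 by (simp add: I_def J_def)
    have finI: "finite I" unfolding I_def by (rule finite_SigmaI) auto
    have Ine: "I \<noteq> {}" using j0I by auto
    have aI: "\<And>p. p \<in> I \<Longrightarrow> a p \<noteq> 0" using Nnz by (auto simp: I_def J_def a_def)
    have sI: "\<And>p. p \<in> I \<Longrightarrow> 0 < s p" using aI sigma_pos by (simp add: s_def)
    have indI: "indep_vars (\<lambda>_. borel) (\<lambda>p \<omega>. a p * Y (fst p) (snd p) \<omega>) I"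
    proof -
      have "indep_vars (\<lambda>_. borel) (\<lambda>(j, l). Y j l) I"
        by (rule indep_vars_subset[OF Y_indep]) (auto simp: I_def)
      then have "indep_vars (\<lambda>_. borel) (\<lambda>p \<omega>. a p * (\<lambda>(j, l). Y j l) p \<omega>) I"
        by (rule indep_vars_compose2[where Y="\<lambda>p y. a p * y" and N="\<lambda>_. borel"]) measurable
      then show ?thesis by (simp add: case_prod_beta)
    qed
    have normI: "\<And>p. p \<in> I \<Longrightarrow> distributed M lborel (\<lambda>\<omega>. a p * Y (fst p) (snd p) \<omega>) (normal_density (mu p) (s p))"
    proof -
      fix p assume p: "p \<in> I"
      have "distributed M lborel (\<lambda>\<omega>. 0 + a p * Y (fst p) (snd p) \<omega>)
          (normal_density (0 + a p * (x (fst p) \<bullet> \<beta>)) (\<bar>a p\<bar> * \<sigma> (fst p)))"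
        by (rule normal_density_affine[OF Y_normal sigma_pos aI[OF p]]) (use p in \<open>auto simp: I_def\<close>)
      then show "distributed M lborel (\<lambda>\<omega>. a p * Y (fst p) (snd p) \<omega>) (normal_density (mu p) (s p))"
        by (simp add: mu_def s_def)
    qed
    have D: "distributed M lborel (\<lambda>\<omega>. \<Sum>p\<in>I. a p * Y (fst p) (snd p) \<omega>)
        (normal_density (\<Sum>p\<in>I. mu p) (sqrt (\<Sum>p\<in>I. (s p)\<^sup>2)))"
      by (rule sum_indep_normal[OF finI Ine indI sI normI])
    have sumJ: "(\<Sum>p\<in>I. h (fst p) (snd p)) = (\<Sum>j\<in>J. \<Sum>l\<in>{1..N j}. h j l)" for h :: "'m \<Rightarrow> nat \<Rightarrow> real"
    proof -
      have "(\<Sum>j\<in>J. \<Sum>l\<in>{1..N j}. h j l) = (\<Sum>(j,l)\<in>I. h j l)"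
        unfolding I_def by (rule sum.Sigma) auto
      then show ?thesis by (simp add: case_prod_beta)
    qed
    have R_eq: "R t = (\<lambda>\<omega>. \<Sum>p\<in>I. a p * Y (fst p) (snd p) \<omega>)"
    proof
      fix \<omega>
      have "(\<Sum>p\<in>I. a p * Y (fst p) (snd p) \<omega>) = (\<Sum>j\<in>J. \<Sum>l\<in>{1..N j}. c$j / real (N j) * Y j l \<omega>)"
        using sumJ[of "\<lambda>j l. c$j / real (N j) * Y j l \<omega>"] by (simp add: a_def)
      also have "\<dots> = (\<Sum>j\<in>J. c$j * (\<Sum>l\<in>{1..N j}. Y j l \<omega>) / real (N j))"
        by (simp add: sum_distrib_left sum_divide_distrib)
      also have "\<dots> = R t \<omega>" unfolding R_def N_def by (rule sum.mono_neutral_left) (auto simp: J_def)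
      finally show "R t \<omega> = (\<Sum>p\<in>I. a p * Y (fst p) (snd p) \<omega>)" by simp
    qed
    have mu_eq: "(\<Sum>p\<in>I. mu p) = z \<bullet> \<beta>"
    proof -
      have "(\<Sum>p\<in>I. mu p) = (\<Sum>j\<in>J. \<Sum>l\<in>{1..N j}. c$j / real (N j) * (x j \<bullet> \<beta>))"
        using sumJ[of "\<lambda>j l. c$j / real (N j) * (x j \<bullet> \<beta>)"] by (simp add: mu_def a_def)
      also have "\<dots> = (\<Sum>j\<in>J. c$j * (x j \<bullet> \<beta>))" using Nnz by (intro sum.cong refl) simp
      also have "\<dots> = (\<Sum>j\<in>UNIV. c$j * (x j \<bullet> \<beta>))" by (rule sum.mono_neutral_left) (auto simp: J_def)
      finally show ?thesis using mean by simp
    qed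
    have s_eq: "(\<Sum>p\<in>I. (s p)\<^sup>2) = v t"
    proof -
      have sq: "\<And>p. (s p)\<^sup>2 = (c$fst p / real (N (fst p)))\<^sup>2 * (\<sigma> (fst p))\<^sup>2"
        unfolding s_def a_def by (simp only: power_mult_distrib power2_abs)
      have "(\<Sum>p\<in>I. (s p)\<^sup>2) = (\<Sum>p\<in>I. (c$fst p / real (N (fst p)))\<^sup>2 * (\<sigma> (fst p))\<^sup>2)"
        by (simp only: sq)
      also have "\<dots> = (\<Sum>j\<in>J. \<Sum>l\<in>{1..N j}. (c$j / real (N j))\<^sup>2 * (\<sigma> j)\<^sup>2)"
        by (rule sumJ[of "\<lambda>j l. (c$j / real (N j))\<^sup>2 * (\<sigma> j)\<^sup>2"])
      also have "\<dots> = (\<Sum>j\<in>J. (c$j)\<^sup>2 * (\<sigma> j)\<^sup>2 / real (f j t))"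
      proof (intro sum.cong refl)
        fix j
        have r: "real (f j t) \<noteq> 0" using Nnz[of j] by (simp add: N_def)
        show "(\<Sum>l\<in>{1..N j}. (c$j / real (N j))\<^sup>2 * (\<sigma> j)\<^sup>2) = (c$j)\<^sup>2 * (\<sigma> j)\<^sup>2 / real (f j t)"
          using r by (simp add: N_def power_divide power2_eq_square field_simps)
      qed
      also have "\<dots> = (\<Sum>j\<in>UNIV. (c$j)\<^sup>2 * (\<sigma> j)\<^sup>2 / real (f j t))" by (rule sum.mono_neutral_left) (auto simp: J_def)
      finally show ?thesis using v_eq by simp
    qed
    have vpos: "v t > 0"
    proof -
      have "0 < (\<Sum>p\<in>I. (s p)\<^sup>2)" by (rule sum_pos[OF finI Ine]) (use sI in fastforce)
      then show ?thesis using s_eq by simp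
    qed
    show "distributed M lborel (R t) (normal_density (z \<bullet> \<beta>) (sqrt (v t))) \<and> v t > 0"
      using D R_eq mu_eq s_eq vpos by simp
  qed
  have KT: "\<And>t B. t \<in> space MT \<Longrightarrow> B \<in> sets borel \<Longrightarrow>
      emeasure M {\<omega>\<in>space M. \<Psi> (t, G \<omega>) \<in> B} = emeasure (gaussian (z \<bullet> \<beta>) (v t)) B"
  proof -
    fix t and B :: "real set" assume t: "t \<in> space MT" and B: "B \<in> sets borel"
    have eq1: "{\<omega>\<in>space M. \<Psi> (t, G \<omega>) \<in> B} = {\<omega>\<in>space M. R t \<omega> \<in> B}" using PsiR[OF t] by simp
    show "emeasure M {\<omega>\<in>space M. \<Psi> (t, G \<omega>) \<in> B} = emeasure (gaussian (z \<bullet> \<beta>) (v t)) B"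
    proof (cases "z = 0")
      case True
      then have c: "c = 0" by (simp add: c_def)
      have R0: "\<And>\<omega>. R t \<omega> = 0" by (simp add: R_def c)
      have v0: "v t = 0" by (simp add: v_def True)
      have "emeasure M {\<omega>\<in>space M. R t \<omega> \<in> B} = indicator B (0::real)"
        by (cases "(0::real) \<in> B") (simp_all add: R0 emeasure_space_1)
      then show ?thesis using eq1 B by (simp add: gaussian_def v0 True)
    next
      case False
      from Rdist[OF t False] have D: "distributed M lborel (R t) (normal_density (z \<bullet> \<beta>) (sqrt (v t)))"
        and vp: "v t > 0" by auto
      have setq: "R t -` B \<inter> space M = {\<omega>\<in>space M. R t \<omega> \<in> B}" by auto
      have "emeasure M {\<omega>\<in>space M. R t \<omega> \<in> B} = emeasure (distr M lborel (R t)) B"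
        using emeasure_distr[OF distributed_measurable[OF D], of B] B setq by simp
      also have "\<dots> = emeasure (density lborel (normal_density (z \<bullet> \<beta>) (sqrt (v t)))) B"
        using distributed_distr_eq_density[OF D] by simp
      finally show ?thesis using eq1 vp by (simp add: gaussian_def)
    qed
  qed
  have KT2: "\<And>t B. t \<in> space MT \<Longrightarrow> B \<in> sets borel \<Longrightarrow> z \<noteq> 0 \<Longrightarrow>
      emeasure M {\<omega>\<in>space M. \<Psi>2 (t, G \<omega>) \<in> B} = emeasure (density lborel std_normal_density) B"
  proof -
    fix t and B :: "real set" assume t: "t \<in> space MT" and B: "B \<in> sets borel" and z: "z \<noteq> 0"
    from Rdist[OF t z] have D: "distributed M lborel (R t) (normal_density (z \<bullet> \<beta>) (sqrt (v t)))"
      and vp: "v t > 0" by auto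
    have D2: "distributed M lborel (\<lambda>\<omega>. (R t \<omega> - z \<bullet> \<beta>) / sqrt (v t)) std_normal_density"
      using D normal_standard_normal_convert[of "sqrt (v t)" "R t" "z \<bullet> \<beta>"] vp by simp
    have eq1: "{\<omega>\<in>space M. \<Psi>2 (t, G \<omega>) \<in> B} = {\<omega>\<in>space M. (R t \<omega> - z \<bullet> \<beta>) / sqrt (v t) \<in> B}"
      using PsiR[OF t] by (simp add: \<Psi>2_def)
    have setq: "(\<lambda>\<omega>. (R t \<omega> - z \<bullet> \<beta>) / sqrt (v t)) -` B \<inter> space M = {\<omega>\<in>space M. (R t \<omega> - z \<bullet> \<beta>) / sqrt (v t) \<in> B}"
      by auto
    have "emeasure M {\<omega>\<in>space M. (R t \<omega> - z \<bullet> \<beta>) / sqrt (v t) \<in> B}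
        = emeasure (distr M lborel (\<lambda>\<omega>. (R t \<omega> - z \<bullet> \<beta>) / sqrt (v t))) B"
      using emeasure_distr[OF distributed_measurable[OF D2], of B] B setq by simp
    also have "\<dots> = emeasure (density lborel std_normal_density) B"
      using distributed_distr_eq_density[OF D2] by simp
    finally show "emeasure M {\<omega>\<in>space M. \<Psi>2 (t, G \<omega>) \<in> B} = emeasure (density lborel std_normal_density) B"
      using eq1 by simp
  qed
  have Zm: "(\<lambda>\<omega>. z \<bullet> \<beta>hat \<omega>) \<in> borel_measurable M"
  proof -
    have h: "(\<lambda>\<omega>. \<Psi> (T \<omega>, G \<omega>)) \<in> borel_measurable M" by measurable
    show ?thesis using h by (rule measurable_cong[THEN iffD2, rotated]) (simp add: eqZ)
  qed
  have part1: "cond_distributed M T MT (\<lambda>\<omega>. z \<bullet> \<beta>hat \<omega>) (\<lambda>t. gaussian (z \<bullet> \<beta>) (v t))"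
    unfolding cond_distributed_def
  proof (intro conjI ballI)
    show "T \<in> measurable M MT" by (rule Tm)
    show "(\<lambda>\<omega>. z \<bullet> \<beta>hat \<omega>) \<in> borel_measurable M" by (rule Zm)
    fix A' and B :: "real set" assume A': "A' \<in> sets MT" and B: "B \<in> sets borel"
    have "emeasure M {\<omega>\<in>space M. T \<omega> \<in> A' \<and> z \<bullet> \<beta>hat \<omega> \<in> B}
        = emeasure M {\<omega>\<in>space M. T \<omega> \<in> A' \<and> \<Psi> (T \<omega>, G \<omega>) \<in> B}"
      by (intro arg_cong[where f="emeasure M"]) (auto simp: eqZ)
    also have "\<dots> = (\<integral>\<^sup>+\<omega>. indicator A' (T \<omega>) * emeasure M {\<omega>'\<in>space M. \<Psi> (T \<omega>, G \<omega>') \<in> B} \<partial>M)"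
      by (rule indep_rv_fubini[OF M TG Psi_m A' B])
    also have "\<dots> = (\<integral>\<^sup>+\<omega>. indicator A' (T \<omega>) * emeasure (gaussian (z \<bullet> \<beta>) (v (T \<omega>))) B \<partial>M)"
      by (rule nn_integral_cong) (simp add: KT[OF measurable_space[OF Tm] B])
    finally show "emeasure M {\<omega>\<in>space M. T \<omega> \<in> A' \<and> z \<bullet> \<beta>hat \<omega> \<in> B}
        = (\<integral>\<^sup>+\<omega>. indicator A' (T \<omega>) * emeasure (gaussian (z \<bullet> \<beta>) (v (T \<omega>))) B \<partial>M)" .
  qed
  have part2: "indep_rv M MT T borel (\<lambda>\<omega>. (z \<bullet> \<beta>hat \<omega> - z \<bullet> \<beta>) / sqrt (v (T \<omega>)))
          \<and> distributed M lborel (\<lambda>\<omega>. (z \<bullet> \<beta>hat \<omega> - z \<bullet> \<beta>) / sqrt (v (T \<omega>))) std_normal_density"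
    if z: "z \<noteq> 0"
  proof -
    define Z2 where "Z2 = (\<lambda>\<omega>. (z \<bullet> \<beta>hat \<omega> - z \<bullet> \<beta>) / sqrt (v (T \<omega>)))"
    let ?\<nu> = "density lborel std_normal_density"
    have eqZ2: "\<And>\<omega>. \<omega> \<in> space M \<Longrightarrow> Z2 \<omega> = \<Psi>2 (T \<omega>, G \<omega>)"
      by (simp add: Z2_def \<Psi>2_def eqZ)
    have Z2m[measurable]: "Z2 \<in> borel_measurable M"
    proof -
      have h: "(\<lambda>\<omega>. \<Psi>2 (T \<omega>, G \<omega>)) \<in> borel_measurable M" using Psi2_m by measurable
      show ?thesis using h by (rule measurable_cong[THEN iffD2, rotated]) (simp add: eqZ2)
    qed
    have KK: "emeasure M {\<omega>\<in>space M. T \<omega> \<in> A' \<and> Z2 \<omega> \<in> B} = emeasure ?\<nu> B * emeasure M (T -` A' \<inter> space M)"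
      if A': "A' \<in> sets MT" and B: "B \<in> sets borel" for A' B
    proof -
      have "emeasure M {\<omega>\<in>space M. T \<omega> \<in> A' \<and> Z2 \<omega> \<in> B}
          = emeasure M {\<omega>\<in>space M. T \<omega> \<in> A' \<and> \<Psi>2 (T \<omega>, G \<omega>) \<in> B}"
        by (intro arg_cong[where f="emeasure M"]) (auto simp: eqZ2)
      also have "\<dots> = (\<integral>\<^sup>+\<omega>. indicator A' (T \<omega>) * emeasure M {\<omega>'\<in>space M. \<Psi>2 (T \<omega>, G \<omega>') \<in> B} \<partial>M)"
        by (rule indep_rv_fubini[OF M TG Psi2_m A' B])
      also have "\<dots> = (\<integral>\<^sup>+\<omega>. emeasure ?\<nu> B * indicator (T -` A' \<inter> space M) \<omega> \<partial>M)"
        by (rule nn_integral_cong) (simp add: KT2[OF measurable_space[OF Tm] B z] indicator_def mult.commute)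
      also have "\<dots> = emeasure ?\<nu> B * emeasure M (T -` A' \<inter> space M)"
        by (rule nn_integral_cmult_indicator) (rule measurable_sets[OF Tm A'])
      finally show ?thesis .
    qed
    have marg: "emeasure M {\<omega>\<in>space M. Z2 \<omega> \<in> B} = emeasure ?\<nu> B" if B: "B \<in> sets borel" for B
    proof -
      have "{\<omega>\<in>space M. Z2 \<omega> \<in> B} = {\<omega>\<in>space M. T \<omega> \<in> space MT \<and> Z2 \<omega> \<in> B}"
        using measurable_space[OF Tm] by auto
      moreover have "T -` space MT \<inter> space M = space M" using measurable_space[OF Tm] by auto
      ultimately show ?thesis using KK[OF sets.top B] by (simp add: emeasure_space_1)
    qed
    have Z2l: "Z2 \<in> measurable M lborel" using Z2m by simp
    have dist: "distributed M lborel Z2 std_normal_density"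
      unfolding distributed_def
    proof (intro conjI)
      show "distr M lborel Z2 = ?\<nu>"
      proof (rule measure_eqI)
        show "sets (distr M lborel Z2) = sets ?\<nu>" by simp
        fix B assume "B \<in> sets (distr M lborel Z2)"
        then have B: "B \<in> sets borel" by simp
        have "Z2 -` B \<inter> space M = {\<omega>\<in>space M. Z2 \<omega> \<in> B}" by auto
        then show "emeasure (distr M lborel Z2) B = emeasure ?\<nu> B"
          using emeasure_distr[OF Z2l, of B] B marg[OF B] by simp
      qed
      show "(\<lambda>x. ennreal (std_normal_density x)) \<in> borel_measurable lborel" by simp
      show "Z2 \<in> measurable M lborel" by (rule Z2l)
    qed
    have ind: "indep_rv M MT T borel Z2"
      unfolding indep_rv_def
    proof (intro conjI)
      show "T \<in> measurable M MT" by (rule Tm)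
      show "Z2 \<in> borel_measurable M" by (rule Z2m)
      show "indep_set {T -` A \<inter> space M |A. A \<in> sets MT} {Z2 -` B \<inter> space M |B. B \<in> sets borel}"
      proof (rule indep_setI)
        show "{T -` A \<inter> space M |A. A \<in> sets MT} \<subseteq> events" using measurable_sets[OF Tm] by auto
        show "{Z2 -` B \<inter> space M |B. B \<in> sets borel} \<subseteq> events" using measurable_sets[OF Z2m] by auto
        fix a b assume "a \<in> {T -` A \<inter> space M |A. A \<in> sets MT}" "b \<in> {Z2 -` B \<inter> space M |B. B \<in> sets borel}"
        then obtain A' B where A': "A' \<in> sets MT" and a: "a = T -` A' \<inter> space M"
          and B: "B \<in> sets borel" and b: "b = Z2 -` B \<inter> space M" by auto
        have ab: "a \<inter> b = {\<omega>\<in>space M. T \<omega> \<in> A' \<and> Z2 \<omega> \<in> B}" using a b by auto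
        have bb: "b = {\<omega>\<in>space M. Z2 \<omega> \<in> B}" using b by auto
        have "emeasure M (a \<inter> b) = emeasure M a * emeasure M b"
          using KK[OF A' B] marg[OF B] ab bb a by (simp add: mult.commute)
        then show "prob (a \<inter> b) = prob a * prob b"
          by (simp add: measure_def enn2real_mult)
      qed
    qed
    show ?thesis using ind dist unfolding Z2_def by simp
  qed
  show ?thesis using part1 part2 by blast
qed

end
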